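(* Let $\mathbf C$ be an admissible category of coframes. There is an identity-on-morphisms functor $(L,\nu_L)\mapsto(L,C_{\nu_L})$ from $\mathbf C^{\mathrm{adh}}$ to $\mathbf C^{\mathrm{top}}$, which is right adjoint to the identity-on-morphisms functor $(L,C)\mapsto(L,\nu_C)$ from $\mathbf C^{\mathrm{top}}$ to $\mathbf C^{\mathrm{adh}}$.
   Context: A category of coframes has coframes as objects and coframe morphisms (preserving arbitrary infima and finite suprema); it is admissible if every powerset is an object and there are classes of index sets $\mathcal I,\mathcal J$ with morphisms exactly the monotone maps preserving existing $I$-indexed infima ($I\in\mathcal I$) and $J$-indexed suprema ($J\in\mathcal J$). Each coframe morphism $\varphi$ has a left adjoint $\varphi_!$. $\mathcal C_L$ is the set of complemented elements of $L$. An adherence structure on $L$ is a monotone $\nu:L\to L$ preserving finite suprema of complemented elements with $\nu(\ell)=\bigwedge\{\nu(a):a\in\mathcal C_L,a\ge\ell\}$; $\mathbf C^{\mathrm{adh}}$ has objects $(L,\nu_L)$ and morphisms the $\mathbf C$-morphisms $\varphi:L\to L'$ with $\nu_{L'}(\ell')\le\varphi(\nu_L(\varphi_!(\ell')))$ for all $\ell'$. A topological $\mathbf C$-object is $(L,C(L))$ with $C(L)$ a sublattice of $L$ consisting of complemented elements (its closed elements); $\mathbf C^{\mathrm{top}}$ has as morphisms the $\mathbf C$-morphisms $\varphi$ with $\varphi(C(L))\subseteq C(L')$. For an adherence structure $\nu$, $C_\nu=\{c\in\mathcal C_L:\nu(c)\le c\}$; for a topological structure $C$, $\nu_C(\ell)=\bigwedge\{c\in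 C:c\ge\ell\}$. *)

theory Defs
  imports Main
begin

class coframe = complete_lattice +
  assumes sup_Inf_distrib: "sup a (Inf S) = (INF s\<in>S. sup a s)"

definition complemented :: "'a::coframe set" where
  "complemented = {a. \<exists>b. inf a b = bot \<and> sup a b = top}"

definition coframe_hom :: "('a::coframe \<Rightarrow> 'b::coframe) \<Rightarrow> bool" where
  "coframe_hom \<phi> \<longleftrightarrow> (\<forall>S. \<phi> (Inf S) = Inf (\<phi> ` S)) \<and> \<phi> bot = bot
      \<and> (\<forall>a b. \<phi> (sup a b) = sup (\<phi> a) (\<phi> b))"

text \<open>Morphisms of the admissible category determined by the classes of index sets
  II (for infima) and JJ (for suprema); index sets are subsets of a fixed index type 'i.
  Since all objects are complete, every indexed infimum/supremum exists.\<close>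
definition C_mor :: "'i set set \<Rightarrow> 'i set set \<Rightarrow> ('a::coframe \<Rightarrow> 'b::coframe) \<Rightarrow> bool" where
  "C_mor II JJ \<phi> \<longleftrightarrow> mono \<phi>
     \<and> (\<forall>I\<in>II. \<forall>f::'i \<Rightarrow> 'a. \<phi> (INF i\<in>I. f i) = (INF i\<in>I. \<phi> (f i)))
     \<and> (\<forall>J\<in>JJ. \<forall>f::'i \<Rightarrow> 'a. \<phi> (SUP j\<in>J. f j) = (SUP j\<in>J. \<phi> (f j)))"

definition lower_adj :: "('a::coframe \<Rightarrow> 'b::coframe) \<Rightarrow> 'b \<Rightarrow> 'a" where
  "lower_adj \<phi> l' = Inf {l. l' \<le> \<phi> l}"

definition adherence :: "('a::coframe \<Rightarrow> 'a) \<Rightarrow> bool" where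
  "adherence \<nu> \<longleftrightarrow> mono \<nu>
     \<and> \<nu> bot = bot
     \<and> (\<forall>a\<in>complemented. \<forall>b\<in>complemented. \<nu> (sup a b) = sup (\<nu> a) (\<nu> b))
     \<and> (\<forall>l. \<nu> l = Inf {\<nu> a | a. a \<in> complemented \<and> l \<le> a})"

definition adh_mor :: "'i set set \<Rightarrow> 'i set set \<Rightarrow> ('a::coframe \<Rightarrow> 'a) \<Rightarrow> ('b::coframe \<Rightarrow> 'b)
    \<Rightarrow> ('a \<Rightarrow> 'b) \<Rightarrow> bool" where
  "adh_mor II JJ \<nu> \<nu>' \<phi> \<longleftrightarrow> C_mor II JJ \<phi> \<and> (\<forall>l'. \<nu>' l' \<le> \<phi> (\<nu> (lower_adj \<phi> l')))"

definition topological :: "'a::coframe set \<Rightarrow> bool" where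
  "topological C \<longleftrightarrow> C \<subseteq> complemented \<and> bot \<in> C \<and> top \<in> C
     \<and> (\<forall>a\<in>C. \<forall>b\<in>C. sup a b \<in> C \<and> inf a b \<in> C)"

definition top_mor :: "'i set set \<Rightarrow> 'i set set \<Rightarrow> 'a::coframe set \<Rightarrow> 'b::coframe set
    \<Rightarrow> ('a \<Rightarrow> 'b) \<Rightarrow> bool" where
  "top_mor II JJ C C' \<phi> \<longleftrightarrow> C_mor II JJ \<phi> \<and> \<phi> ` C \<subseteq> C'"

definition C_of :: "('a::coframe \<Rightarrow> 'a) \<Rightarrow> 'a set" where
  "C_of \<nu> = {c \<in> complemented. \<nu> c \<le> c}"

definition nu_of :: "'a::coframe set \<Rightarrow> 'a \<Rightarrow> 'a" where
  "nu_of C l = Inf {c \<in> C. l \<le> c}"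

end

theory Submission
  imports Defs
begin

lemma cf_sup_inf: "sup (a::'a::coframe) (inf b c) = inf (sup a b) (sup a c)"
  using sup_Inf_distrib[of a "{b,c}"] by simp

lemma cf_sup_Inf2: "sup (Inf X) (Inf (Y::'a::coframe set)) = Inf {sup x y | x y. x \<in> X \<and> y \<in> Y}"
proof -
  have "sup (Inf X) (Inf Y) = (INF y\<in>Y. sup (Inf X) y)" by (rule sup_Inf_distrib)
  also have "\<dots> = (INF y\<in>Y. Inf (sup y ` X))"
    by (simp add: sup_commute sup_Inf_distrib)
  also have "\<dots> = Inf {sup x y | x y. x \<in> X \<and> y \<in> Y}"
  proof (rule antisym)
    show "(INF y\<in>Y. Inf (sup y ` X)) \<le> Inf {sup x y | x y. x \<in> X \<and> y \<in> Y}"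
    proof (rule Inf_greatest)
      fix z assume "z \<in> {sup x y | x y. x \<in> X \<and> y \<in> Y}"
      then obtain x y where z: "z = sup x y" "x \<in> X" "y \<in> Y" by blast
      have "(INF y\<in>Y. Inf (sup y ` X)) \<le> Inf (sup y ` X)" using z(3) by (rule INF_lower)
      also have "Inf (sup y ` X) \<le> sup y x" using z by (intro Inf_lower) auto
      finally show "(INF y\<in>Y. Inf (sup y ` X)) \<le> z" using z by (simp add: sup_commute)
    qed
    show "Inf {sup x y | x y. x \<in> X \<and> y \<in> Y} \<le> (INF y\<in>Y. Inf (sup y ` X))"
    proof (rule INF_greatest, rule Inf_greatest)
      fix y z assume "y \<in> Y" "z \<in> sup y ` X"
      then obtain x where "x \<in> X" "z = sup x y" by (auto simp: sup_commute)
      then show "Inf {sup x y | x y. x \<in> X \<and> y \<in> Y} \<le> z" using \<open>y \<in> Y\<close> by (intro Inf_lower) auto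
    qed
  qed
  finally show ?thesis .
qed

lemma cf_inf_sup: "inf (a::'a::coframe) (sup b c) = sup (inf a b) (inf a c)"
  by (rule distrib_imp2) (rule cf_sup_inf)

lemma compl_sup: assumes "a \<in> complemented" "b \<in> complemented"
  shows "sup a (b::'a::coframe) \<in> complemented"
proof -
  obtain a' where a: "inf a a' = bot" "sup a a' = top" using assms(1) unfolding complemented_def by blast
  obtain b' where b: "inf b b' = bot" "sup b b' = top" using assms(2) unfolding complemented_def by blast
  have "inf (sup a b) (inf a' b') = sup (inf (inf a' b') a) (inf (inf a' b') b)"
    by (simp add: inf_commute cf_inf_sup)
  also have "inf (inf a' b') a \<le> inf a a'" by (auto intro: le_infI1 le_infI2)
  hence "inf (inf a' b') a = bot" using a(1) by (simp add: bot_unique)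
  also have "inf (inf a' b') b \<le> inf b b'" by (auto intro: le_infI1 le_infI2)
  hence "inf (inf a' b') b = bot" using b(1) by (simp add: bot_unique)
  finally have 1: "inf (sup a b) (inf a' b') = bot" by simp
  have "sup (sup a b) (inf a' b') = inf (sup (sup a b) a') (sup (sup a b) b')"
    by (rule cf_sup_inf)
  also have "sup a a' \<le> sup (sup a b) a'" by (auto intro: le_supI1 le_supI2)
  hence "sup (sup a b) a' = top" using a(2) by (simp add: top_le)
  also have "sup b b' \<le> sup (sup a b) b'" by (auto intro: le_supI1 le_supI2)
  hence "sup (sup a b) b' = top" using b(2) by (simp add: top_le)
  finally have 2: "sup (sup a b) (inf a' b') = top" by simp
  show ?thesis using 1 2 unfolding complemented_def by blast
qed

lemma compl_inf: assumes "a \<in> complemented" "b \<in> complemented"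
  shows "inf a (b::'a::coframe) \<in> complemented"
proof -
  obtain a' where a: "inf a a' = bot" "sup a a' = top" using assms(1) unfolding complemented_def by blast
  obtain b' where b: "inf b b' = bot" "sup b b' = top" using assms(2) unfolding complemented_def by blast
  have "inf (inf a b) (sup a' b') = sup (inf (inf a b) a') (inf (inf a b) b')"
    by (rule cf_inf_sup)
  also have "inf (inf a b) a' \<le> inf a a'" by (auto intro: le_infI1 le_infI2)
  hence "inf (inf a b) a' = bot" using a(1) by (simp add: bot_unique)
  also have "inf (inf a b) b' \<le> inf b b'" by (auto intro: le_infI1 le_infI2)
  hence "inf (inf a b) b' = bot" using b(1) by (simp add: bot_unique)
  finally have 1: "inf (inf a b) (sup a' b') = bot" by simp
  have "sup (inf a b) (sup a' b') = sup (sup a' b') (inf a b)" by (rule sup_commute)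
  also have "\<dots> = inf (sup (sup a' b') a) (sup (sup a' b') b)" by (rule cf_sup_inf)
  also have "sup a a' \<le> sup (sup a' b') a" by (auto intro: le_supI1 le_supI2)
  hence "sup (sup a' b') a = top" using a(2) by (simp add: top_le)
  also have "sup b b' \<le> sup (sup a' b') b" by (auto intro: le_supI1 le_supI2)
  hence "sup (sup a' b') b = top" using b(2) by (simp add: top_le)
  finally have 2: "sup (inf a b) (sup a' b') = top" by simp
  show ?thesis using 1 2 unfolding complemented_def by blast
qed

lemma hom_top: "coframe_hom \<phi> \<Longrightarrow> \<phi> top = top"
proof -
  assume h: "coframe_hom \<phi>"
  have "\<phi> (Inf {}) = Inf (\<phi> ` {})" using h unfolding coframe_hom_def by blast
  thus ?thesis by simp
qed

lemma hom_inf: "coframe_hom \<phi> \<Longrightarrow> \<phi> (inf a b) = inf (\<phi> a) (\<phi> b)"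
proof -
  assume h: "coframe_hom \<phi>"
  have "\<phi> (Inf {a,b}) = Inf (\<phi> ` {a,b})" using h unfolding coframe_hom_def by blast
  thus ?thesis by simp
qed

lemma hom_mono: fixes \<phi> :: "'a::coframe \<Rightarrow> 'b::coframe" assumes h: "coframe_hom \<phi>" shows "mono \<phi>"
proof (rule monoI)
  fix x y :: 'a assume "x \<le> y"
  hence "\<phi> x = \<phi> (inf x y)" by (simp add: inf.absorb1)
  also have "\<dots> = inf (\<phi> x) (\<phi> y)" by (rule hom_inf[OF h])
  finally show "\<phi> x \<le> \<phi> y" by (metis le_iff_inf)
qed

lemma hom_compl: assumes "coframe_hom \<phi>" "a \<in> complemented" shows "\<phi> a \<in> complemented"
proof -
  obtain a' where a: "inf a a' = bot" "sup a a' = top" using assms(2) unfolding complemented_def by blast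
  have "inf (\<phi> a) (\<phi> a') = bot" "sup (\<phi> a) (\<phi> a') = top"
  proof -
    show "inf (\<phi> a) (\<phi> a') = bot"
      using a hom_inf[OF assms(1), of a a'] assms(1) unfolding coframe_hom_def by simp
    have "sup (\<phi> a) (\<phi> a') = \<phi> (sup a a')" using assms(1) unfolding coframe_hom_def by simp
    then show "sup (\<phi> a) (\<phi> a') = top" using a hom_top[OF assms(1)] by simp
  qed
  thus ?thesis unfolding complemented_def by blast
qed

lemma lower_adj_le: "lower_adj \<phi> (\<phi> c) \<le> c"
  unfolding lower_adj_def by (rule Inf_lower) simp

lemma unit_adj: assumes "coframe_hom \<phi>" shows "l' \<le> \<phi> (lower_adj \<phi> l')"
proof -
  have "\<phi> (lower_adj \<phi> l') = Inf (\<phi> ` {l. l' \<le> \<phi> l})"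
    using assms unfolding coframe_hom_def lower_adj_def by blast
  thus ?thesis by (auto intro!: Inf_greatest)
qed

lemma hom_Inf: "coframe_hom \<phi> \<Longrightarrow> \<phi> (Inf S) = Inf (\<phi> ` S)"
  unfolding coframe_hom_def by blast

lemma nu_of_mono: "mono (nu_of C)"
  unfolding nu_of_def by (rule monoI) (auto intro!: Inf_superset_mono)

lemma nu_of_fix: "c \<in> C \<Longrightarrow> nu_of C c = c"
  unfolding nu_of_def by (rule antisym) (auto intro: Inf_lower Inf_greatest)

lemma nu_of_le: "c \<in> C \<Longrightarrow> l \<le> c \<Longrightarrow> nu_of C l \<le> c"
  unfolding nu_of_def by (auto intro: Inf_lower)

lemma part1: assumes "adherence (\<nu>::'a::coframe \<Rightarrow> 'a)" shows "topological (C_of \<nu>)"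
proof -
  have m: "mono \<nu>" and b: "\<nu> bot = bot"
    and s0: "\<forall>a\<in>complemented. \<forall>b\<in>complemented. \<nu> (sup a b) = sup (\<nu> a) (\<nu> b)"
    using assms unfolding adherence_def by blast+
  have s: "\<And>a b. a\<in>complemented \<Longrightarrow> b\<in>complemented \<Longrightarrow> \<nu> (sup a b) = sup (\<nu> a) (\<nu> b)"
    using s0 by blast
  have bc: "bot \<in> complemented" "top \<in> complemented" unfolding complemented_def by auto
  have sub: "C_of \<nu> \<subseteq> complemented" unfolding C_of_def by blast
  have bot: "bot \<in> C_of \<nu>" using bc b unfolding C_of_def by simp
  have top: "top \<in> C_of \<nu>" using bc unfolding C_of_def by simp
  have cl: "sup a b \<in> C_of \<nu> \<and> inf a b \<in> C_of \<nu>" if a: "a \<in> C_of \<nu>" and bb: "b \<in> C_of \<nu>" for a b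
  proof
    have ac: "a \<in> complemented" "\<nu> a \<le> a" using a unfolding C_of_def by auto
    have bcc: "b \<in> complemented" "\<nu> b \<le> b" using bb unfolding C_of_def by auto
    have "\<nu> (sup a b) = sup (\<nu> a) (\<nu> b)" using s ac bcc by blast
    also have "\<dots> \<le> sup a b" using ac bcc by (rule_tac sup_mono) auto
    finally show "sup a b \<in> C_of \<nu>" using compl_sup[OF ac(1) bcc(1)] unfolding C_of_def by blast
    have "\<nu> (inf a b) \<le> \<nu> a" by (rule monoD[OF m]) simp
    moreover have "\<nu> (inf a b) \<le> \<nu> b" by (rule monoD[OF m]) simp
    ultimately have "\<nu> (inf a b) \<le> inf a b" using ac bcc
      by (meson inf_greatest order_trans)
    then show "inf a b \<in> C_of \<nu>" using compl_inf[OF ac(1) bcc(1)] unfolding C_of_def by blast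
  qed
  show ?thesis unfolding topological_def using sub bot top cl by blast
qed

lemma part2: assumes "topological (C::'a::coframe set)" shows "adherence (nu_of C)"
proof -
  have C: "C \<subseteq> complemented" "bot \<in> C" "\<And>a b. a \<in> C \<Longrightarrow> b \<in> C \<Longrightarrow> sup a b \<in> C"
    using assms unfolding topological_def by auto
  have sup: "nu_of C (sup a b) = sup (nu_of C a) (nu_of C b)" for a b
  proof -
    have "sup (nu_of C a) (nu_of C b) = Inf {sup x y | x y. x \<in> {c \<in> C. a \<le> c} \<and> y \<in> {c \<in> C. b \<le> c}}"
      unfolding nu_of_def by (rule cf_sup_Inf2)
    also have "\<dots> = nu_of C (sup a b)" unfolding nu_of_def
    proof (rule antisym)
      show "Inf {sup x y |x y. x \<in> {c \<in> C. a \<le> c} \<and> y \<in> {c \<in> C. b \<le> c}} \<le> Inf {c \<in> C. sup a b \<le> c}"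
        by (rule Inf_greatest, rule Inf_lower2[where u="sup c c" for c]) auto
      show "Inf {c \<in> C. sup a b \<le> c} \<le> Inf {sup x y |x y. x \<in> {c \<in> C. a \<le> c} \<and> y \<in> {c \<in> C. b \<le> c}}"
        by (rule Inf_greatest) (auto intro!: Inf_lower C(3) intro: le_supI1 le_supI2 sup_mono)
    qed
    finally show ?thesis by simp
  qed
  have rep: "nu_of C l = Inf {nu_of C a | a. a \<in> complemented \<and> l \<le> a}" for l
  proof (rule antisym)
    show "nu_of C l \<le> Inf {nu_of C a |a. a \<in> complemented \<and> l \<le> a}"
      by (auto intro!: Inf_greatest monoD[OF nu_of_mono])
    show "Inf {nu_of C a |a. a \<in> complemented \<and> l \<le> a} \<le> nu_of C l"
      unfolding nu_of_def[of C l]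
    proof (rule Inf_greatest)
      fix c assume "c \<in> {c \<in> C. l \<le> c}"
      then have "c \<in> C" "l \<le> c" "c \<in> complemented" using C(1) by auto
      show "Inf {nu_of C a |a. a \<in> complemented \<and> l \<le> a} \<le> c"
      proof (rule Inf_lower2[of "nu_of C c"])
        show "nu_of C c \<in> {nu_of C a |a. a \<in> complemented \<and> l \<le> a}"
          using \<open>c \<in> complemented\<close> \<open>l \<le> c\<close> by blast
      qed (simp add: nu_of_fix[OF \<open>c \<in> C\<close>])
    qed
  qed
  show ?thesis unfolding adherence_def
    using nu_of_mono nu_of_fix[OF C(2)] sup rep by blast
qed

theorem mainTheorem13:
  fixes II JJ :: "'i set set"
  assumes coframe_cat: "\<And>\<phi> :: 'a::coframe \<Rightarrow> 'b::coframe. C_mor II JJ \<phi> \<Longrightarrow> coframe_hom \<phi>"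
  shows
    \<comment> \<open>object part of the functor adh -> top\<close>
    "(\<forall>\<nu> :: 'a \<Rightarrow> 'a. adherence \<nu> \<longrightarrow> topological (C_of \<nu>))
     \<comment> \<open>object part of the functor top -> adh\<close>
   \<and> (\<forall>C :: 'a set. topological C \<longrightarrow> adherence (nu_of C))
     \<comment> \<open>adh -> top is identity on morphisms\<close>
   \<and> (\<forall>(\<nu> :: 'a \<Rightarrow> 'a) (\<nu>' :: 'b \<Rightarrow> 'b) (\<phi> :: 'a \<Rightarrow> 'b).
        adherence \<nu> \<longrightarrow> adherence \<nu>' \<longrightarrow> adh_mor II JJ \<nu> \<nu>' \<phi>
        \<longrightarrow> top_mor II JJ (C_of \<nu>) (C_of \<nu>') \<phi>)
     \<comment> \<open>top -> adh is identity on morphisms\<close>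
   \<and> (\<forall>(C :: 'a set) (C' :: 'b set) (\<phi> :: 'a \<Rightarrow> 'b).
        topological C \<longrightarrow> topological C' \<longrightarrow> top_mor II JJ C C' \<phi>
        \<longrightarrow> adh_mor II JJ (nu_of C) (nu_of C') \<phi>)
     \<comment> \<open>adjunction: hom-sets coincide (natural bijection = identity)\<close>
   \<and> (\<forall>(C :: 'a set) (\<nu>' :: 'b \<Rightarrow> 'b) (\<phi> :: 'a \<Rightarrow> 'b).
        topological C \<longrightarrow> adherence \<nu>' \<longrightarrow>
        (adh_mor II JJ (nu_of C) \<nu>' \<phi> \<longleftrightarrow> top_mor II JJ C (C_of \<nu>') \<phi>))"
proof (intro conjI allI impI)
  show "\<And>\<nu>. adherence (\<nu>::'a\<Rightarrow>'a) \<Longrightarrow> topological (C_of \<nu>)" by (rule part1)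
  show "\<And>C. topological (C::'a set) \<Longrightarrow> adherence (nu_of C)" by (rule part2)
next
  fix \<nu> :: "'a \<Rightarrow> 'a" and \<nu>' :: "'b \<Rightarrow> 'b" and \<phi> :: "'a \<Rightarrow> 'b"
  assume a: "adherence \<nu>" "adherence \<nu>'" "adh_mor II JJ \<nu> \<nu>' \<phi>"
  have cm: "C_mor II JJ \<phi>" and h: "\<And>l'. \<nu>' l' \<le> \<phi> (\<nu> (lower_adj \<phi> l'))"
    using a(3) unfolding adh_mor_def by auto
  have hom: "coframe_hom \<phi>" using coframe_cat cm .
  have mn: "mono \<nu>" using a(1) unfolding adherence_def by blast
  have "\<phi> c \<in> C_of \<nu>'" if c: "c \<in> C_of \<nu>" for c
  proof -
    have "\<nu> (lower_adj \<phi> (\<phi> c)) \<le> \<nu> c" by (rule monoD[OF mn lower_adj_le])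
    also have "\<dots> \<le> c" using c unfolding C_of_def by auto
    finally have "\<phi> (\<nu> (lower_adj \<phi> (\<phi> c))) \<le> \<phi> c" by (rule monoD[OF hom_mono[OF hom]])
    then show ?thesis using h[of "\<phi> c"] c hom_compl[OF hom] unfolding C_of_def by auto
  qed
  then show "top_mor II JJ (C_of \<nu>) (C_of \<nu>') \<phi>" unfolding top_mor_def using cm by auto
next
  fix C :: "'a set" and C' :: "'b set" and \<phi> :: "'a \<Rightarrow> 'b"
  assume a: "topological C" "topological C'" "top_mor II JJ C C' \<phi>"
  have cm: "C_mor II JJ \<phi>" and im: "\<phi> ` C \<subseteq> C'" using a(3) unfolding top_mor_def by auto
  have hom: "coframe_hom \<phi>" using coframe_cat cm .
  have "nu_of C' l' \<le> \<phi> (nu_of C (lower_adj \<phi> l'))" for l'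
  proof -
    have "\<phi> (nu_of C (lower_adj \<phi> l')) = Inf (\<phi> ` {c \<in> C. lower_adj \<phi> l' \<le> c})"
      unfolding nu_of_def by (rule hom_Inf[OF hom])
    moreover have "nu_of C' l' \<le> \<phi> c" if "c \<in> C" "lower_adj \<phi> l' \<le> c" for c
    proof (rule nu_of_le)
      show "\<phi> c \<in> C'" using im that by auto
      show "l' \<le> \<phi> c" using unit_adj[OF hom, of l'] monoD[OF hom_mono[OF hom] that(2)] by auto
    qed
    ultimately show ?thesis by (auto intro!: Inf_greatest)
  qed
  then show "adh_mor II JJ (nu_of C) (nu_of C') \<phi>" unfolding adh_mor_def using cm by auto
next
  fix C :: "'a set" and \<nu>' :: "'b \<Rightarrow> 'b" and \<phi> :: "'a \<Rightarrow> 'b"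
  assume a: "topological C" "adherence \<nu>'"
  have mn': "mono \<nu>'" using a(2) unfolding adherence_def by blast
  have Cc: "C \<subseteq> complemented" using a(1) unfolding topological_def by auto
  show "adh_mor II JJ (nu_of C) \<nu>' \<phi> \<longleftrightarrow> top_mor II JJ C (C_of \<nu>') \<phi>"
  proof
    assume m: "adh_mor II JJ (nu_of C) \<nu>' \<phi>"
    have cm: "C_mor II JJ \<phi>" and h: "\<And>l'. \<nu>' l' \<le> \<phi> (nu_of C (lower_adj \<phi> l'))"
      using m unfolding adh_mor_def by auto
    have hom: "coframe_hom \<phi>" using coframe_cat cm .
    have "\<phi> c \<in> C_of \<nu>'" if c: "c \<in> C" for c
    proof -
      have "nu_of C (lower_adj \<phi> (\<phi> c)) \<le> c" by (rule nu_of_le[OF c lower_adj_le])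
      then have "\<phi> (nu_of C (lower_adj \<phi> (\<phi> c))) \<le> \<phi> c" by (rule monoD[OF hom_mono[OF hom]])
      then show ?thesis using h[of "\<phi> c"] c Cc hom_compl[OF hom] unfolding C_of_def by fastforce
    qed
    then show "top_mor II JJ C (C_of \<nu>') \<phi>" unfolding top_mor_def using cm by auto
  next
    assume m: "top_mor II JJ C (C_of \<nu>') \<phi>"
    have cm: "C_mor II JJ \<phi>" and im: "\<phi> ` C \<subseteq> C_of \<nu>'" using m unfolding top_mor_def by auto
    have hom: "coframe_hom \<phi>" using coframe_cat cm .
    have "\<nu>' l' \<le> \<phi> (nu_of C (lower_adj \<phi> l'))" for l'
    proof -
      have "\<phi> (nu_of C (lower_adj \<phi> l')) = Inf (\<phi> ` {c \<in> C. lower_adj \<phi> l' \<le> c})"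
        unfolding nu_of_def by (rule hom_Inf[OF hom])
      moreover have "\<nu>' l' \<le> \<phi> c" if "c \<in> C" "lower_adj \<phi> l' \<le> c" for c
      proof -
        have "l' \<le> \<phi> c" using unit_adj[OF hom, of l'] monoD[OF hom_mono[OF hom] that(2)] by auto
        then have "\<nu>' l' \<le> \<nu>' (\<phi> c)" by (rule monoD[OF mn'])
        also have "\<dots> \<le> \<phi> c" using im that(1) unfolding C_of_def by auto
        finally show ?thesis .
      qed
      ultimately show ?thesis by (auto intro!: Inf_greatest)
    qed
    then show "adh_mor II JJ (nu_of C) \<nu>' \<phi>" unfolding adh_mor_def using cm by auto
  qed
qed

end
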